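(* Let $d,d'\ge 1$, let $\{\ket{\Phi_b}\}_{b=1}^{dd'}$ be an orthonormal basis of $\mathbb{C}^{d}\otimes\mathbb{C}^{d'}$, and let $\ket\psi\in\mathbb{C}^{d'}$ be a unit vector. Define the operators on $\mathbb{C}^d$ $$\mu_b=(I\otimes\bra\psi)\,\ket{\Phi_b}\!\bra{\Phi_b}\,(I\otimes\ket\psi),\qquad b=1,\dots,dd'.$$ Then $s_{\boldsymbol\mu}\equiv\dim\operatorname{span}(\{\mu_b\}_{b=1}^{dd'})\ge d$.
   Context: The family $\boldsymbol\mu=(\mu_b)_b$ is a POVM on $\mathbb{C}^d$ (positive operators summing to the identity). The span is the complex linear span inside the space of linear operators on $\mathbb{C}^d$. *)

theory Defs
  imports Complex_Main "HOL-Library.Cardinality" "HOL-Library.Function_Algebras"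
begin

text \<open>Vectors in C^n are functions from a finite index type to complex;
  C^d \<otimes> C^d' is indexed by the product type. Operators on C^d are
  d x d complex matrices, i.e. functions 'a \<Rightarrow> 'a \<Rightarrow> complex.\<close>

definition cinner :: "('c::finite \<Rightarrow> complex) \<Rightarrow> ('c \<Rightarrow> complex) \<Rightarrow> complex" where
  "cinner u v = (\<Sum>x\<in>UNIV. cnj (u x) * v x)"

text \<open>(I \<otimes> \<langle>psi|) applied to a vector of C^d \<otimes> C^d'.\<close>
definition contract_snd :: "('b::finite \<Rightarrow> complex) \<Rightarrow> ('a::finite \<times> 'b \<Rightarrow> complex) \<Rightarrow> ('a \<Rightarrow> complex)" where
  "contract_snd psi Phi = (\<lambda>i. \<Sum>k\<in>UNIV. cnj (psi k) * Phi (i, k))"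

definition outer :: "('a \<Rightarrow> complex) \<Rightarrow> ('a \<Rightarrow> 'a \<Rightarrow> complex)" where
  "outer v = (\<lambda>i j. v i * cnj (v j))"

text \<open>mu_b = (I \<otimes> \<langle>psi|) |Phi_b\<rangle>\<langle>Phi_b| (I \<otimes> |psi\<rangle>)
  = |w_b\<rangle>\<langle>w_b| with w_b = (I \<otimes> \<langle>psi|)|Phi_b\<rangle>.\<close>
definition mu :: "(nat \<Rightarrow> ('a::finite \<times> 'b::finite \<Rightarrow> complex)) \<Rightarrow> ('b \<Rightarrow> complex) \<Rightarrow> nat \<Rightarrow> ('a \<Rightarrow> 'a \<Rightarrow> complex)" where
  "mu Phi psi b = outer (contract_snd psi (Phi b))"

definition opscale :: "complex \<Rightarrow> ('a \<Rightarrow> 'a \<Rightarrow> complex) \<Rightarrow> ('a \<Rightarrow> 'a \<Rightarrow> complex)" where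
  "opscale c M = (\<lambda>i j. c * M i j)"

end

theory Submission
  imports Defs
begin

lemma sum_fun_app: "(sum f A) x = sum (\<lambda>a. f a x) A"
  by (induction A rule: infinite_finite_induct) auto

definition vscale :: "complex \<Rightarrow> ('c \<Rightarrow> complex) \<Rightarrow> ('c \<Rightarrow> complex)" where
  "vscale c v = (\<lambda>x. c * v x)"

definition ebasis :: "'c \<Rightarrow> 'c \<Rightarrow> complex" where
  "ebasis y = (\<lambda>x. if x = y then 1 else 0)"

interpretation VS: vector_space "vscale :: complex \<Rightarrow> ('c \<Rightarrow> complex) \<Rightarrow> _"
  by unfold_locales (auto simp: vscale_def algebra_simps fun_eq_iff)

interpretation OP: vector_space "opscale :: complex \<Rightarrow> ('c \<Rightarrow> 'c \<Rightarrow> complex) \<Rightarrow> _"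
  by unfold_locales (auto simp: opscale_def algebra_simps fun_eq_iff)

lemma inj_ebasis: "inj ebasis"
  by (auto simp: inj_def ebasis_def fun_eq_iff)

lemma vs_sum_eval: "(\<Sum>v\<in>S. vscale (u v) (g v)) x = (\<Sum>v\<in>S. u v * g v x)"
  by (simp add: sum_fun_app vscale_def)

lemma expand_ebasis: "v = (\<Sum>y\<in>UNIV. vscale (v y) (ebasis (y::'c::finite)))"
proof -
  have "(\<Sum>y\<in>UNIV. vscale (v y) (ebasis y)) x = v x" for x
    by (simp only: vs_sum_eval) (simp add: ebasis_def if_distrib[where f="\<lambda>t. _ * t"] cong: if_cong)
  then show ?thesis by auto
qed

lemma indep_ebasis: "VS.independent (range (ebasis :: 'c::finite \<Rightarrow> _))"
proof (rule VS.independent_if_scalars_zero)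
  fix f :: "('c \<Rightarrow> complex) \<Rightarrow> complex" and x :: "'c \<Rightarrow> complex"
  assume s: "(\<Sum>x\<in>range ebasis. vscale (f x) x) = 0" and x: "x \<in> range ebasis"
  then obtain y where y: "x = ebasis y" by auto
  have "0 = (\<Sum>x\<in>range ebasis. vscale (f x) x) y" using s by simp
  also have "\<dots> = (\<Sum>z\<in>UNIV. f (ebasis z) * ebasis z y)"
    by (simp only: vs_sum_eval) (simp add: sum.reindex inj_ebasis)
  also have "\<dots> = f x" by (simp add: ebasis_def y if_distrib[where f="\<lambda>t. _ * t"] cong: if_cong)
  finally show "f x = 0" by simp
qed simp

interpretation VSF: finite_dimensional_vector_space
  "vscale :: complex \<Rightarrow> ('c::finite \<Rightarrow> complex) \<Rightarrow> _" "range ebasis"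
proof unfold_locales
  show "finite (range (ebasis :: 'c \<Rightarrow> _))" by simp
  show "VS.independent (range (ebasis :: 'c \<Rightarrow> _))" by (rule indep_ebasis)
  show "VS.span (range (ebasis :: 'c \<Rightarrow> _)) = UNIV"
  proof safe
    fix v :: "'c \<Rightarrow> complex"
    show "v \<in> VS.span (range ebasis)"
      by (subst expand_ebasis) (intro VS.span_sum VS.span_scale VS.span_base, simp)
  qed simp
qed

lemma card_range_ebasis: "card (range (ebasis :: 'c::finite \<Rightarrow> _)) = CARD('c)"
  by (simp add: card_image inj_ebasis)

lemma cinner_sum_right: "cinner v (\<Sum>t\<in>T. vscale (u t) (g t)) = (\<Sum>t\<in>T. u t * cinner v (g t))"
  unfolding cinner_def vs_sum_eval
  by (simp add: sum_distrib_left sum_distrib_right mult_ac sum.swap[where A=T])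

lemma completeness:
  fixes Phi :: "nat \<Rightarrow> ('c::finite \<Rightarrow> complex)"
  assumes on: "\<forall>b\<in>{..<CARD('c)}. \<forall>c\<in>{..<CARD('c)}.
              cinner (Phi b) (Phi c) = (if b = c then 1 else 0)"
  shows "(\<Sum>b<CARD('c). Phi b x * cnj (Phi b y)) = (if x = y then 1 else 0)"
proof -
  define I where "I = {..<CARD('c)}"
  have inj: "inj_on Phi I"
  proof (rule inj_onI)
    fix b c assume "b \<in> I" "c \<in> I" "Phi b = Phi c"
    then have "cinner (Phi b) (Phi c) = 1" using on unfolding I_def by auto
    then show "b = c" using on \<open>b \<in> I\<close> \<open>c \<in> I\<close> unfolding I_def
      by (metis zero_neq_one)
  qed
  have coef: "cinner (Phi c) (\<Sum>b\<in>I. vscale (u b) (Phi b)) = u c" if "c \<in> I" for u c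
  proof -
    have "cinner (Phi c) (\<Sum>b\<in>I. vscale (u b) (Phi b)) = (\<Sum>b\<in>I. u b * (if c = b then 1 else 0))"
      unfolding cinner_sum_right using on that unfolding I_def by (intro sum.cong) auto
    also have "\<dots> = u c" using that by (simp add: I_def if_distrib[where f="\<lambda>t. _ * t"] cong: if_cong)
    finally show ?thesis .
  qed
  have indep: "VS.independent (Phi ` I)"
  proof (rule VS.independent_if_scalars_zero)
    show "finite (Phi ` I)" unfolding I_def by simp
    fix f :: "('c \<Rightarrow> complex) \<Rightarrow> complex" and v
    assume s: "(\<Sum>x\<in>Phi ` I. vscale (f x) x) = 0" and v: "v \<in> Phi ` I"
    then obtain c where c: "c \<in> I" "v = Phi c" by auto
    have "(\<Sum>x\<in>Phi ` I. vscale (f x) x) = (\<Sum>b\<in>I. vscale (f (Phi b)) (Phi b))"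
      by (simp add: sum.reindex inj)
    then have "0 = cinner (Phi c) (\<Sum>b\<in>I. vscale (f (Phi b)) (Phi b))"
      using s by (simp add: cinner_def)
    then show "f v = 0" using coef[OF c(1)] c by simp
  qed
  have card: "card (Phi ` I) = CARD('c)" using inj by (simp add: card_image I_def)
  have span: "UNIV \<subseteq> VS.span (Phi ` I)"
    by (rule VSF.card_ge_dim_independent) (use indep card card_range_ebasis[where 'c='c] in auto)
  have "ebasis y \<in> VS.span (Phi ` I)" using span by auto
  then obtain u where u: "ebasis y = (\<Sum>v\<in>Phi ` I. vscale (u v) v)"
    using VS.span_finite[of "Phi ` I"] unfolding I_def by auto
  then have u2: "ebasis y = (\<Sum>b\<in>I. vscale (u (Phi b)) (Phi b))"
    by (simp add: sum.reindex inj)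
  have ub: "u (Phi b) = cnj (Phi b y)" if "b \<in> I" for b
  proof -
    have "u (Phi b) = cinner (Phi b) (ebasis y)" using coef[OF that] u2 by simp
    also have "\<dots> = cnj (Phi b y)" unfolding cinner_def ebasis_def
      by (simp add: if_distrib[where f="\<lambda>t. _ * t"] cong: if_cong)
    finally show ?thesis .
  qed
  have "(if x = y then 1 else 0) = (\<Sum>b\<in>I. u (Phi b) * Phi b x)"
    using fun_cong[OF u2, of x] by (simp add: vs_sum_eval ebasis_def)
  also have "\<dots> = (\<Sum>b\<in>I. Phi b x * cnj (Phi b y))"
    using ub by (intro sum.cong) auto
  finally show ?thesis unfolding I_def by simp
qed

lemma povm:
  fixes Phi :: "nat \<Rightarrow> ('a::finite \<times> 'b::finite \<Rightarrow> complex)" and psi :: "'b \<Rightarrow> complex"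
  assumes comp: "\<And>x y. (\<Sum>b\<in>I. Phi b x * cnj (Phi b y)) = (if x = y then 1 else 0)"
    and unit: "cinner psi psi = 1"
  shows "(\<Sum>b\<in>I. contract_snd psi (Phi b) i * cnj (contract_snd psi (Phi b) j)) = (if i = j then 1 else 0)"
proof -
  have "(\<Sum>b\<in>I. contract_snd psi (Phi b) i * cnj (contract_snd psi (Phi b) j))
     = (\<Sum>b\<in>I. \<Sum>k\<in>UNIV. \<Sum>l\<in>UNIV. (cnj (psi k) * psi l) * (Phi b (i, k) * cnj (Phi b (j, l))))"
    unfolding contract_snd_def by (simp add: sum_product sum_distrib_left mult_ac)
  also have "\<dots> = (\<Sum>k\<in>UNIV. \<Sum>l\<in>UNIV. (cnj (psi k) * psi l) * (\<Sum>b\<in>I. Phi b (i, k) * cnj (Phi b (j, l))))"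
    by (simp add: sum_distrib_left sum.swap[where A=I])
  also have "\<dots> = (\<Sum>k\<in>UNIV. \<Sum>l\<in>UNIV. (cnj (psi k) * psi l) * (if i = j \<and> k = l then 1 else 0))"
    by (simp add: comp)
  also have "\<dots> = (if i = j then (\<Sum>k\<in>UNIV. cnj (psi k) * psi k) else 0)"
    by (cases "i = j") (simp_all add: if_distrib[where f="\<lambda>t. _ * t"] cong: if_cong)
  also have "\<dots> = (if i = j then 1 else 0)" using unit by (simp add: cinner_def)
  finally show ?thesis .
qed

lemma nonzero_ex: "(c::'a \<Rightarrow> complex) \<noteq> 0 \<Longrightarrow> \<exists>j. c j \<noteq> 0"
  by (auto simp: fun_eq_iff)

lemma outer_inj:
  fixes B :: "('a \<Rightarrow> complex) set"
  assumes ind: "VS.independent B"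
  shows "inj_on outer B"
proof (rule inj_onI, rule ccontr)
  fix c c' assume c: "c \<in> B" "c' \<in> B" "outer c = outer c'" "c \<noteq> c'"
  have "c' \<noteq> 0" using ind c VS.dependent_zero by blast
  then obtain j where j: "c' j \<noteq> 0" using nonzero_ex by blast
  define u where "u v = (if v = c then cnj (c j) else - cnj (c' j))" for v
  have "(\<Sum>v\<in>{c, c'}. vscale (u v) v) = 0"
  proof
    fix i
    have e: "c i * cnj (c j) = c' i * cnj (c' j)" using fun_cong[OF fun_cong[OF c(3), of i], of j]
      by (simp add: outer_def)
    have "(\<Sum>v\<in>{c, c'}. vscale (u v) v) i = cnj (c j) * c i - cnj (c' j) * c' i"
      using c(4) by (simp add: vscale_def u_def)
    also have "\<dots> = 0" using e by (simp add: mult.commute)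
    finally show "(\<Sum>v\<in>{c, c'}. vscale (u v) v) i = 0 i" by simp
  qed
  moreover have "VS.independent {c, c'}" using c VS.independent_mono[OF ind] by auto
  ultimately have "u c' = 0" using VS.dependent_finite[of "{c, c'}"] by auto
  then show False using j c(4) by (simp add: u_def)
qed

lemma mult_swap3: "a * (b * c) = a * c * (b::complex)"
  by (simp add: mult_ac)

lemma outer_indep:
  fixes B :: "('a \<Rightarrow> complex) set"
  assumes ind: "VS.independent B" and fin: "finite B"
  shows "OP.independent (outer ` B)"
proof (rule OP.independent_if_scalars_zero)
  show "finite (outer ` B)" using fin by simp
  fix f :: "('a \<Rightarrow> 'a \<Rightarrow> complex) \<Rightarrow> complex" and M
  assume s: "(\<Sum>x\<in>outer ` B. opscale (f x) x) = 0" and M: "M \<in> outer ` B"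
  then obtain c where c: "c \<in> B" "M = outer c" by auto
  have "c \<noteq> 0" using ind c VS.dependent_zero by blast
  then obtain j where j: "c j \<noteq> 0" using nonzero_ex by blast
  have s2: "(\<Sum>v\<in>B. opscale (f (outer v)) (outer v)) = 0"
    using s by (simp add: sum.reindex outer_inj[OF ind])
  have z: "(\<Sum>v\<in>B. vscale (f (outer v) * cnj (v j)) v) = 0"
  proof
    fix i
    have "(\<Sum>v\<in>B. opscale (f (outer v)) (outer v)) i j = 0" using s2 by simp
    moreover have "(\<Sum>v\<in>B. opscale (f (outer v)) (outer v)) i j = (\<Sum>v\<in>B. f (outer v) * (v i * cnj (v j)))"
      by (simp only: sum_fun_app) (simp add: opscale_def outer_def)
    moreover have "(\<Sum>v\<in>B. vscale (f (outer v) * cnj (v j)) v) i = (\<Sum>v\<in>B. f (outer v) * cnj (v j) * v i)"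
      by (rule vs_sum_eval)
    moreover have "(\<Sum>v\<in>B. f (outer v) * (v i * cnj (v j))) = (\<Sum>v\<in>B. f (outer v) * cnj (v j) * v i)"
      by (rule sum.cong[OF refl]) (rule mult_swap3)
    ultimately show "(\<Sum>v\<in>B. vscale (f (outer v) * cnj (v j)) v) i = 0 i" by simp
  qed
  have "f (outer c) * cnj (c j) = 0"
  proof (rule ccontr)
    assume "f (outer c) * cnj (c j) \<noteq> 0"
    then have "VS.dependent B"
      unfolding VS.dependent_finite[OF fin]
      by (intro exI[of _ "\<lambda>v. f (outer v) * cnj (v j)"] conjI bexI[OF _ c(1)]) (use z in auto)
    then show False using ind by simp
  qed
  then show "f M = 0" using j c by simp
qed

theorem lemma1:
  fixes Phi :: "nat \<Rightarrow> ('a::finite \<times> 'b::finite \<Rightarrow> complex)"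
    and psi :: "'b \<Rightarrow> complex"
  assumes orthonormal: "\<forall>b\<in>{..<CARD('a) * CARD('b)}. \<forall>c\<in>{..<CARD('a) * CARD('b)}.
              cinner (Phi b) (Phi c) = (if b = c then 1 else 0)"
    and unit: "cinner psi psi = 1"
  shows "vector_space.dim opscale (mu Phi psi ` {..<CARD('a) * CARD('b)}) \<ge> CARD('a)"
proof -
  define I where "I = {..<CARD('a) * CARD('b)}"
  have cardab: "CARD('a \<times> 'b) = CARD('a) * CARD('b)" by simp
  have comp: "(\<Sum>b\<in>I. Phi b x * cnj (Phi b y)) = (if x = y then 1 else 0)" for x y
    using completeness[of Phi x y] orthonormal unfolding cardab I_def by simp
  define w where "w b = contract_snd psi (Phi b)" for b
  have P: "(\<Sum>b\<in>I. w b i * cnj (w b j)) = (if i = j then 1 else 0)" for i j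
    using povm[OF comp unit] unfolding w_def by simp
  have spanw: "v \<in> VS.span (w ` I)" for v
  proof -
    have "(\<Sum>b\<in>I. vscale (cinner (w b) v) (w b)) i = v i" for i
    proof -
      have "(\<Sum>b\<in>I. vscale (cinner (w b) v) (w b)) i = (\<Sum>b\<in>I. \<Sum>j\<in>UNIV. v j * (w b i * cnj (w b j)))"
        unfolding vs_sum_eval cinner_def by (simp add: sum_distrib_left mult_ac)
      also have "\<dots> = (\<Sum>j\<in>UNIV. v j * (\<Sum>b\<in>I. w b i * cnj (w b j)))"
        by (simp add: sum_distrib_left sum.swap[where A=I])
      also have "\<dots> = v i" unfolding P
        by (simp add: if_distrib[where f="\<lambda>t. _ * t"] cong: if_cong)
      finally show ?thesis .
    qed
    then have "v = (\<Sum>b\<in>I. vscale (cinner (w b) v) (w b))" by auto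
    also have "\<dots> \<in> VS.span (w ` I)"
      by (intro VS.span_sum VS.span_scale VS.span_base) simp
    finally show ?thesis .
  qed
  obtain B where B: "B \<subseteq> w ` I" "VS.independent B" "w ` I \<subseteq> VS.span B"
    using VS.maximal_independent_subset[of "w ` I"] by blast
  have finB: "finite B" using B(1) finite_subset unfolding I_def by blast
  have "VS.span (w ` I) \<subseteq> VS.span B"
    using VS.span_mono[OF B(3)] VS.span_span by blast
  then have "range ebasis \<subseteq> VS.span B" using spanw by blast
  then have cB: "CARD('a) \<le> card B"
    using VS.independent_span_bound[OF finB indep_ebasis] card_range_ebasis[where 'c='a] by simp
  have sub: "outer ` B \<subseteq> mu Phi psi ` I"
    using B(1) unfolding mu_def w_def by auto
  obtain C where C: "C \<subseteq> mu Phi psi ` I" "OP.independent C" "mu Phi psi ` I \<subseteq> OP.span C"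
     "card C = OP.dim (mu Phi psi ` I)"
    using OP.basis_exists by blast
  have finC: "finite C" using C(1) finite_subset unfolding I_def by blast
  have "card (outer ` B) \<le> card C"
    using OP.independent_span_bound[OF finC outer_indep[OF B(2) finB]] sub C(3) by blast
  moreover have "card (outer ` B) = card B" by (rule card_image[OF outer_inj[OF B(2)]])
  ultimately show ?thesis using cB C(4) unfolding I_def by simp
qed

end
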